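(* Let $S$ be a Boolean inverse monoid satisfying condition (H). Then for all $s,t\in S$, $s^*e_{st}s=e_{ts}$.
   Context: An inverse semigroup is a semigroup $S$ in which every $s$ has a unique $s^*$ with $ss^*s=s$, $s^*ss^*=s^*$; assumed countable with a zero. $E(S)$ is its set of idempotents. A Boolean inverse monoid is an inverse monoid in which every finite compatible set (pairwise $s^*t,st^*\in E(S)$) has a join, multiplication distributes over such joins, and $E(S)$ is a Boolean algebra. For $Z\subseteq W\subseteq E(S)$, $Z$ is a cover of $W$ if every nonzero $w\in W$ has some $z\in Z$ with $zw\ne0$. For $s\in S$ let $\mathcal J_s=\{e\in E(S): se=e\}$. Condition (H): each $\mathcal J_s$ admits a finite cover $C\subseteq\mathcal J_s$. Under (H), $e_s$ denotes $\bigvee_{c\in C}c$ for a finite cover $C$ of $\mathcal J_s$; this is independent of $C$, and $\mathcal J_s=\{e: e\le e_s\}$. *)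

theory Defs
  imports Main "HOL-Library.Countable_Set"
begin

text \<open>The semigroup S is the whole type 'a, with multiplication mult and zero z.\<close>

definition inverse_semigroup :: "('a \<Rightarrow> 'a \<Rightarrow> 'a) \<Rightarrow> 'a \<Rightarrow> bool" where
  "inverse_semigroup mult z \<longleftrightarrow>
     (\<forall>a b c. mult (mult a b) c = mult a (mult b c)) \<and>
     (\<forall>s. \<exists>!t. mult (mult s t) s = s \<and> mult (mult t s) t = t) \<and>
     (\<forall>s. mult z s = z \<and> mult s z = z)"

definition istar :: "('a \<Rightarrow> 'a \<Rightarrow> 'a) \<Rightarrow> 'a \<Rightarrow> 'a" where
  "istar mult s = (THE t. mult (mult s t) s = s \<and> mult (mult t s) t = t)"

definition idem :: "('a \<Rightarrow> 'a \<Rightarrow> 'a) \<Rightarrow> 'a set" where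
  "idem mult = {e. mult e e = e}"

definition nleq :: "('a \<Rightarrow> 'a \<Rightarrow> 'a) \<Rightarrow> 'a \<Rightarrow> 'a \<Rightarrow> bool" where
  "nleq mult s t \<longleftrightarrow> s = mult t (mult (istar mult s) s)"

definition is_join_in :: "('a \<Rightarrow> 'a \<Rightarrow> 'a) \<Rightarrow> 'a set \<Rightarrow> 'a set \<Rightarrow> 'a \<Rightarrow> bool" where
  "is_join_in mult X A j \<longleftrightarrow> j \<in> X \<and> (\<forall>a\<in>A. nleq mult a j) \<and>
     (\<forall>u\<in>X. (\<forall>a\<in>A. nleq mult a u) \<longrightarrow> nleq mult j u)"

abbreviation is_join :: "('a \<Rightarrow> 'a \<Rightarrow> 'a) \<Rightarrow> 'a set \<Rightarrow> 'a \<Rightarrow> bool" where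
  "is_join mult A j \<equiv> is_join_in mult UNIV A j"

definition compatible_set :: "('a \<Rightarrow> 'a \<Rightarrow> 'a) \<Rightarrow> 'a set \<Rightarrow> bool" where
  "compatible_set mult A \<longleftrightarrow> (\<forall>s\<in>A. \<forall>t\<in>A.
     mult (istar mult s) t \<in> idem mult \<and> mult s (istar mult t) \<in> idem mult)"

definition idem_boolean_algebra :: "('a \<Rightarrow> 'a \<Rightarrow> 'a) \<Rightarrow> 'a \<Rightarrow> 'a \<Rightarrow> bool" where
  "idem_boolean_algebra mult z one \<longleftrightarrow>
     (let E = idem mult;
          join = (\<lambda>e f. THE j. is_join_in mult E {e, f} j);
          meet = (\<lambda>e f. THE m. m \<in> E \<and> nleq mult m e \<and> nleq mult m f \<and>
                      (\<forall>u\<in>E. nleq mult u e \<and> nleq mult u f \<longrightarrow> nleq mult u m))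
      in (\<forall>e\<in>E. \<forall>f\<in>E. (\<exists>j. is_join_in mult E {e, f} j)) \<and>
         (\<forall>e\<in>E. \<forall>f\<in>E. (\<exists>m. m \<in> E \<and> nleq mult m e \<and> nleq mult m f \<and>
                      (\<forall>u\<in>E. nleq mult u e \<and> nleq mult u f \<longrightarrow> nleq mult u m))) \<and>
         (\<forall>e\<in>E. \<forall>f\<in>E. \<forall>g\<in>E. meet e (join f g) = join (meet e f) (meet e g)) \<and>
         (\<forall>e\<in>E. \<exists>f\<in>E. meet e f = z \<and> join e f = one))"

definition boolean_inverse_monoid :: "('a \<Rightarrow> 'a \<Rightarrow> 'a) \<Rightarrow> 'a \<Rightarrow> 'a \<Rightarrow> bool" where
  "boolean_inverse_monoid mult z one \<longleftrightarrow>
     inverse_semigroup mult z \<and>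
     (\<forall>s. mult one s = s \<and> mult s one = s) \<and>
     (\<forall>A. finite A \<and> compatible_set mult A \<longrightarrow> (\<exists>j. is_join mult A j)) \<and>
     (\<forall>A j s. finite A \<and> compatible_set mult A \<and> is_join mult A j \<longrightarrow>
         is_join mult ((\<lambda>a. mult s a) ` A) (mult s j) \<and>
         is_join mult ((\<lambda>a. mult a s) ` A) (mult j s)) \<and>
     idem_boolean_algebra mult z one"

definition is_cover :: "('a \<Rightarrow> 'a \<Rightarrow> 'a) \<Rightarrow> 'a \<Rightarrow> 'a set \<Rightarrow> 'a set \<Rightarrow> bool" where
  "is_cover mult z C W \<longleftrightarrow> C \<subseteq> W \<and> (\<forall>w\<in>W. w \<noteq> z \<longrightarrow> (\<exists>c\<in>C. mult c w \<noteq> z))"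

definition Jset :: "('a \<Rightarrow> 'a \<Rightarrow> 'a) \<Rightarrow> 'a \<Rightarrow> 'a set" where
  "Jset mult s = {e \<in> idem mult. mult s e = e}"

definition condH :: "('a \<Rightarrow> 'a \<Rightarrow> 'a) \<Rightarrow> 'a \<Rightarrow> bool" where
  "condH mult z \<longleftrightarrow> (\<forall>s. \<exists>C. finite C \<and> is_cover mult z C (Jset mult s))"

text \<open>e_s: the join of some finite cover of J_s (independent of the choice under (H)).\<close>
definition e_of :: "('a \<Rightarrow> 'a \<Rightarrow> 'a) \<Rightarrow> 'a \<Rightarrow> 'a \<Rightarrow> 'a" where
  "e_of mult z s = (SOME j. \<exists>C. finite C \<and> is_cover mult z C (Jset mult s) \<and> is_join mult C j)"

end

theory Submission
  imports Defs
begin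

locale ISG =
  fixes mult :: "'a \<Rightarrow> 'a \<Rightarrow> 'a" (infixl "\<cdot>" 70) and z :: 'a
  assumes isg: "inverse_semigroup mult z"
begin

abbreviation ist where "ist \<equiv> istar mult"
abbreviation E where "E \<equiv> idem mult"

lemma assoc[simp]: "a \<cdot> b \<cdot> c = a \<cdot> (b \<cdot> c)"
  using isg unfolding inverse_semigroup_def by blast

lemma zl[simp]: "z \<cdot> a = z" and zr[simp]: "a \<cdot> z = z"
  using isg unfolding inverse_semigroup_def by blast+

lemma ex1: "\<exists>!t. s \<cdot> t \<cdot> s = s \<and> t \<cdot> s \<cdot> t = t"
  using isg unfolding inverse_semigroup_def by blast

lemma star_prop: "s \<cdot> ist s \<cdot> s = s \<and> ist s \<cdot> s \<cdot> ist s = ist s"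
  unfolding istar_def using theI'[OF ex1[of s]] by blast

lemma s1[simp]: "s \<cdot> (ist s \<cdot> s) = s" using star_prop by simp
lemma s2[simp]: "ist s \<cdot> (s \<cdot> ist s) = ist s" using star_prop by simp
lemma s1x[simp]: "s \<cdot> (ist s \<cdot> (s \<cdot> x)) = s \<cdot> x"
proof -
  have "s \<cdot> (ist s \<cdot> (s \<cdot> x)) = (s \<cdot> (ist s \<cdot> s)) \<cdot> x" by (simp only: assoc)
  also have "\<dots> = s \<cdot> x" by (simp only: s1)
  finally show ?thesis .
qed
lemma s2x[simp]: "ist s \<cdot> (s \<cdot> (ist s \<cdot> x)) = ist s \<cdot> x"
proof -
  have "ist s \<cdot> (s \<cdot> (ist s \<cdot> x)) = (ist s \<cdot> (s \<cdot> ist s)) \<cdot> x" by (simp only: assoc)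
  also have "\<dots> = ist s \<cdot> x" by (simp only: s2)
  finally show ?thesis .
qed

lemma star_unique: "s \<cdot> (t \<cdot> s) = s \<Longrightarrow> t \<cdot> (s \<cdot> t) = t \<Longrightarrow> ist s = t"
proof -
  assume a1: "s \<cdot> (t \<cdot> s) = s" and a2: "t \<cdot> (s \<cdot> t) = t"
  have A: "s \<cdot> t \<cdot> s = s \<and> t \<cdot> s \<cdot> t = t" using a1 a2 by (simp only: assoc)
  have B: "s \<cdot> ist s \<cdot> s = s \<and> ist s \<cdot> s \<cdot> ist s = ist s" by (rule star_prop)
  show ?thesis using ex1[of s] A B by blast
qed

lemma star_star[simp]: "ist (ist s) = s"
  by (rule star_unique) (simp only: s1 s2)+

lemma idemD: "e \<in> E \<Longrightarrow> e \<cdot> e = e" unfolding idem_def by simp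
lemma idemI: "e \<cdot> e = e \<Longrightarrow> e \<in> E" unfolding idem_def by simp

lemma idem_x: "e \<in> E \<Longrightarrow> e \<cdot> (e \<cdot> x) = e \<cdot> x"
proof -
  assume e: "e \<in> E"
  have "e \<cdot> (e \<cdot> x) = (e \<cdot> e) \<cdot> x" by (simp only: assoc)
  also have "\<dots> = e \<cdot> x" by (simp only: idemD[OF e])
  finally show ?thesis .
qed

lemma star_idem: "e \<in> E \<Longrightarrow> ist e = e"
  by (rule star_unique) (simp only: idem_x idemD)+

lemma idem_prod_aux: assumes e: "e \<in> E" and f: "f \<in> E" shows "e \<cdot> f \<in> E"
proof -
  define a where "a = e \<cdot> f"
  define b where "b = f \<cdot> (ist a \<cdot> e)"
  have "a \<cdot> (b \<cdot> a) = e \<cdot> (f \<cdot> (ist a \<cdot> (e \<cdot> f)))"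
    unfolding a_def b_def using e f by (simp add: idem_x)
  also have "\<dots> = a" unfolding a_def using s1[of "e \<cdot> f"] by (simp only: assoc)
  finally have 1: "a \<cdot> (b \<cdot> a) = a" .
  have "b \<cdot> (a \<cdot> b) = f \<cdot> (ist a \<cdot> (a \<cdot> (ist a \<cdot> e)))"
    unfolding a_def b_def using e f by (simp add: idem_x)
  also have "\<dots> = b" unfolding b_def by (simp only: s2x)
  finally have 2: "b \<cdot> (a \<cdot> b) = b" .
  have bb: "b \<cdot> b = b"
  proof -
    have "b \<cdot> b = f \<cdot> (ist a \<cdot> (a \<cdot> (ist a \<cdot> e)))"
      unfolding a_def b_def using e f by (simp add: idem_x)
    also have "\<dots> = b" unfolding b_def by (simp only: s2x)
    finally show ?thesis .
  qed
  have "ist a = b" using star_unique[OF 1 2] .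
  hence "a = ist b" by (metis star_star)
  also have "\<dots> = b" using star_idem[OF idemI[OF bb]] .
  finally show ?thesis unfolding a_def using bb idemI by simp
qed

lemma commute: assumes e: "e \<in> E" and f: "f \<in> E" shows "e \<cdot> f = f \<cdot> e"
proof -
  have ef: "e \<cdot> f \<in> E" and fe: "f \<cdot> e \<in> E" using idem_prod_aux e f by auto
  have "(e \<cdot> f) \<cdot> ((f \<cdot> e) \<cdot> (e \<cdot> f)) = e \<cdot> f \<cdot> (e \<cdot> f)"
    using e f by (simp add: idem_x)
  hence 1: "(e \<cdot> f) \<cdot> ((f \<cdot> e) \<cdot> (e \<cdot> f)) = e \<cdot> f" using idemD[OF ef] by simp
  have "(f \<cdot> e) \<cdot> ((e \<cdot> f) \<cdot> (f \<cdot> e)) = f \<cdot> e \<cdot> (f \<cdot> e)"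
    using e f by (simp add: idem_x)
  hence 2: "(f \<cdot> e) \<cdot> ((e \<cdot> f) \<cdot> (f \<cdot> e)) = f \<cdot> e" using idemD[OF fe] by simp
  have "ist (e \<cdot> f) = f \<cdot> e" using star_unique[OF 1 2] .
  with star_idem[OF ef] show ?thesis by simp
qed

lemma idem_mult: "e \<in> E \<Longrightarrow> f \<in> E \<Longrightarrow> e \<cdot> f \<in> E"
  by (rule idem_prod_aux)

lemma rx: assumes h: "a \<cdot> b = c" shows "a \<cdot> (b \<cdot> x) = c \<cdot> x"
proof -
  have "a \<cdot> (b \<cdot> x) = (a \<cdot> b) \<cdot> x" by (simp only: assoc)
  also have "\<dots> = c \<cdot> x" by (simp only: h)
  finally show ?thesis .
qed

lemma P_idem: "s \<cdot> ist s \<in> E"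
  by (rule idemI) simp
lemma Q_idem: "ist s \<cdot> s \<in> E"
  by (rule idemI) simp

lemma commute_x: assumes "e \<in> E" "f \<in> E" shows "e \<cdot> (f \<cdot> x) = f \<cdot> (e \<cdot> x)"
proof -
  have "e \<cdot> (f \<cdot> x) = (e \<cdot> f) \<cdot> x" by (simp only: assoc)
  also have "\<dots> = (f \<cdot> e) \<cdot> x" using commute[OF assms] by simp
  also have "\<dots> = f \<cdot> (e \<cdot> x)" by (simp only: assoc)
  finally show ?thesis .
qed

lemma ist_prod: "ist (a \<cdot> b) = ist b \<cdot> ist a"
proof (rule star_unique)
  have "a \<cdot> b \<cdot> (ist b \<cdot> ist a \<cdot> (a \<cdot> b)) = a \<cdot> ((b \<cdot> ist b) \<cdot> ((ist a \<cdot> a) \<cdot> b))"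
    by (simp only: assoc)
  also have "\<dots> = a \<cdot> ((ist a \<cdot> a) \<cdot> ((b \<cdot> ist b) \<cdot> b))"
    using commute_x[OF P_idem[of b] Q_idem[of a]] by (simp only: assoc)
  also have "\<dots> = a \<cdot> b" by simp
  finally show "a \<cdot> b \<cdot> (ist b \<cdot> ist a \<cdot> (a \<cdot> b)) = a \<cdot> b" .
  have "ist b \<cdot> ist a \<cdot> (a \<cdot> b \<cdot> (ist b \<cdot> ist a)) = ist b \<cdot> ((ist a \<cdot> a) \<cdot> ((b \<cdot> ist b) \<cdot> ist a))"
    by (simp only: assoc)
  also have "\<dots> = ist b \<cdot> ((b \<cdot> ist b) \<cdot> ((ist a \<cdot> a) \<cdot> ist a))"
    using commute_x[OF P_idem[of b] Q_idem[of a]] by (simp only: assoc)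
  also have "\<dots> = ist b \<cdot> ist a" by simp
  finally show "ist b \<cdot> ist a \<cdot> (a \<cdot> b \<cdot> (ist b \<cdot> ist a)) = ist b \<cdot> ist a" .
qed

lemma nleq_idem: "a \<in> E \<Longrightarrow> nleq mult a b \<longleftrightarrow> a = b \<cdot> a"
  unfolding nleq_def using star_idem idemD by simp

lemma antisym_E: assumes "a \<in> E" "b \<in> E" "nleq mult a b" "nleq mult b a" shows "a = b"
proof -
  have "a = b \<cdot> a" "b = a \<cdot> b" using assms nleq_idem by auto
  thus ?thesis using commute[OF assms(1,2)] by simp
qed

lemma z_idem: "z \<in> E" by (rule idemI) simp

lemma key:
  assumes fE: "f \<in> E" and fst: "s \<cdot> (t \<cdot> f) = f"
    and fmax: "\<And>g. g \<in> E \<Longrightarrow> s \<cdot> (t \<cdot> g) = g \<Longrightarrow> g = f \<cdot> g"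
    and eE: "e \<in> E" and ets: "t \<cdot> (s \<cdot> e) = e"
    and emax: "\<And>g. g \<in> E \<Longrightarrow> t \<cdot> (s \<cdot> g) = g \<Longrightarrow> g = e \<cdot> g"
  shows "ist s \<cdot> (f \<cdot> s) = e"
proof -
  define Q where "Q = ist s \<cdot> s"
  have QE: "Q \<in> E" unfolding Q_def by (rule Q_idem)
  have f1: "s \<cdot> (ist s \<cdot> f) = f"
  proof -
    have "s \<cdot> (ist s \<cdot> (s \<cdot> (t \<cdot> f))) = s \<cdot> (t \<cdot> f)" by (rule s1x)
    thus ?thesis using fst by simp
  qed
  define w where "w = t \<cdot> (f \<cdot> s)"
  have ww: "w \<cdot> w = w"
  proof -
    have "w \<cdot> w = t \<cdot> (f \<cdot> (s \<cdot> (t \<cdot> (f \<cdot> s))))" unfolding w_def by simp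
    also have "\<dots> = t \<cdot> (f \<cdot> (f \<cdot> s))" using rx[OF fst, of s] by simp
    also have "\<dots> = w" unfolding w_def using idem_x[OF fE] by simp
    finally show ?thesis .
  qed
  hence wE: "w \<in> E" by (rule idemI)
  define x where "x = ist s \<cdot> (f \<cdot> s)"
  have "x = ist s \<cdot> (s \<cdot> (t \<cdot> f) \<cdot> s)" unfolding x_def using fst by simp
  also have "\<dots> = Q \<cdot> w" unfolding Q_def w_def by simp
  also have "\<dots> = w \<cdot> Q" using commute[OF QE wE] .
  also have "\<dots> = w" unfolding Q_def w_def by simp
  finally have xw: "x = w" .
  have xE: "x \<in> E" using xw wE by simp
  have "t \<cdot> (s \<cdot> x) = t \<cdot> (f \<cdot> s)" unfolding x_def using rx[OF f1, of s] by simp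
  hence "t \<cdot> (s \<cdot> x) = x" using xw w_def by simp
  hence xe: "x = e \<cdot> x" using emax[OF xE] by simp
  have ee: "e = e \<cdot> (ist s \<cdot> ist t)"
  proof -
    have "ist (t \<cdot> (s \<cdot> e)) = e \<cdot> (ist s \<cdot> ist t)"
      by (simp add: ist_prod star_idem[OF eE])
    thus ?thesis using ets star_idem[OF eE] by simp
  qed
  have p1: "e \<cdot> (ist s \<cdot> (ist t \<cdot> (t \<cdot> (s \<cdot> e)))) = e"
  proof -
    have "e \<cdot> (ist s \<cdot> (ist t \<cdot> (t \<cdot> (s \<cdot> e)))) = (e \<cdot> (ist s \<cdot> ist t)) \<cdot> e"
      using ets by simp
    also have "\<dots> = e" using ee[symmetric] idemD[OF eE] by simp
    finally show ?thesis .
  qed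
  define p where "p = ist s \<cdot> (ist t \<cdot> (t \<cdot> s))"
  have pE: "p \<in> E" unfolding p_def using Q_idem[of "t \<cdot> s"] by (simp add: ist_prod)
  have pQ: "p \<cdot> Q = p" unfolding p_def Q_def by simp
  have pe: "e \<cdot> (p \<cdot> e) = e" using p1 unfolding p_def by simp
  have eQ: "e \<cdot> Q = e"
  proof -
    have "e \<cdot> Q = e \<cdot> (p \<cdot> e) \<cdot> Q" using pe by simp
    also have "\<dots> = e \<cdot> (p \<cdot> (e \<cdot> Q))" by (simp only: assoc)
    also have "\<dots> = e \<cdot> (p \<cdot> (Q \<cdot> e))" using commute[OF eE QE] by simp
    also have "\<dots> = e \<cdot> ((p \<cdot> Q) \<cdot> e)" by (simp only: assoc)
    also have "\<dots> = e" using pQ pe by simp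
    finally show ?thesis .
  qed
  have eQx: "e \<cdot> (Q \<cdot> y) = e \<cdot> y" for y using rx[OF eQ] .
  define y where "y = s \<cdot> (e \<cdot> ist s)"
  have "y \<cdot> y = s \<cdot> (e \<cdot> (Q \<cdot> (e \<cdot> ist s)))" unfolding y_def Q_def by simp
  also have "\<dots> = y" unfolding y_def using eQx idem_x[OF eE] by simp
  finally have yE: "y \<in> E" by (rule idemI)
  have "s \<cdot> (t \<cdot> y) = y" unfolding y_def using rx[OF ets, of "ist s"] by simp
  hence yf: "y = f \<cdot> y" using fmax[OF yE] by simp
  have "ist s \<cdot> (y \<cdot> s) = Q \<cdot> (e \<cdot> Q)" unfolding y_def Q_def by simp
  also have "\<dots> = e" using eQ commute[OF QE eE] by simp
  finally have A: "ist s \<cdot> (y \<cdot> s) = e" .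
  have "ist s \<cdot> ((f \<cdot> y) \<cdot> s) = ist s \<cdot> (f \<cdot> (s \<cdot> (e \<cdot> Q)))" unfolding y_def Q_def by simp
  also have "\<dots> = x \<cdot> e" unfolding x_def using eQ by simp
  finally have "ist s \<cdot> ((f \<cdot> y) \<cdot> s) = x \<cdot> e" .
  with A yf have "e = x \<cdot> e" by simp
  with xe commute[OF xE eE] have "x = e" by simp
  thus ?thesis unfolding x_def .
qed

end

locale BIM = ISG +
  fixes one :: 'a
  assumes bim: "boolean_inverse_monoid mult z one" and H: "condH mult z"
begin

lemma one_l[simp]: "one \<cdot> s = s" and one_r[simp]: "s \<cdot> one = s"
  using bim unfolding boolean_inverse_monoid_def by blast+

lemma joins_ex: "finite A \<Longrightarrow> compatible_set mult A \<Longrightarrow> \<exists>j. is_join mult A j"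
  using bim unfolding boolean_inverse_monoid_def by blast

lemma distr: "finite A \<Longrightarrow> compatible_set mult A \<Longrightarrow> is_join mult A j \<Longrightarrow>
    is_join mult ((\<lambda>a. s \<cdot> a) ` A) (s \<cdot> j)"
  using bim unfolding boolean_inverse_monoid_def by blast

definition jn where "jn e f = (THE j. is_join_in mult E {e, f} j)"
definition mt where "mt e f = (THE m. m \<in> E \<and> nleq mult m e \<and> nleq mult m f \<and>
                      (\<forall>u\<in>E. nleq mult u e \<and> nleq mult u f \<longrightarrow> nleq mult u m))"

lemma BA: "(\<forall>e\<in>E. \<forall>f\<in>E. \<forall>g\<in>E. mt e (jn f g) = jn (mt e f) (mt e g)) \<and>
  (\<forall>e\<in>E. \<exists>f\<in>E. mt e f = z \<and> jn e f = one)"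
  using bim unfolding boolean_inverse_monoid_def idem_boolean_algebra_def Let_def mt_def jn_def
  by blast

lemma mt_eq: assumes e: "e \<in> E" and f: "f \<in> E" shows "mt e f = e \<cdot> f"
  unfolding mt_def
proof (rule the_equality)
  have ef: "e \<cdot> f \<in> E" using idem_mult[OF e f] .
  show "e \<cdot> f \<in> E \<and> nleq mult (e \<cdot> f) e \<and> nleq mult (e \<cdot> f) f \<and>
    (\<forall>u\<in>E. nleq mult u e \<and> nleq mult u f \<longrightarrow> nleq mult u (e \<cdot> f))"
  proof (intro conjI ballI impI)
    show "e \<cdot> f \<in> E" by (rule ef)
    show "nleq mult (e \<cdot> f) e" using nleq_idem[OF ef] idem_x[OF e] by simp
    show "nleq mult (e \<cdot> f) f" using nleq_idem[OF ef] commute[OF e f] idem_x[OF f] by simp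
    fix u assume u: "u \<in> E" and "nleq mult u e \<and> nleq mult u f"
    hence "u = e \<cdot> u" "u = f \<cdot> u" using nleq_idem[OF u] by auto
    hence "u = e \<cdot> f \<cdot> u" by simp
    thus "nleq mult u (e \<cdot> f)" using nleq_idem[OF u] by simp
  qed
  fix m assume m: "m \<in> E \<and> nleq mult m e \<and> nleq mult m f \<and>
    (\<forall>u\<in>E. nleq mult u e \<and> nleq mult u f \<longrightarrow> nleq mult u m)"
  hence mE: "m \<in> E" and 1: "m = e \<cdot> m" and 2: "m = f \<cdot> m" using nleq_idem by auto
  have "nleq mult m (e \<cdot> f)" using 1 2 nleq_idem[OF mE] by simp
  moreover have "nleq mult (e \<cdot> f) m"
  proof -
    have "nleq mult (e \<cdot> f) e" using nleq_idem[OF ef] idem_x[OF e] by simp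
    moreover have "nleq mult (e \<cdot> f) f" using nleq_idem[OF ef] commute[OF e f] idem_x[OF f] by simp
    ultimately show ?thesis using m ef by blast
  qed
  ultimately show "m = e \<cdot> f" using antisym_E mE ef by blast
qed

lemma jn_eq: assumes j: "is_join_in mult E {e, f} j" shows "jn e f = j"
  unfolding jn_def
proof (rule the_equality)
  show "is_join_in mult E {e, f} j" by (rule j)
  fix j' assume j': "is_join_in mult E {e, f} j'"
  show "j' = j" using j j' unfolding is_join_in_def by (meson antisym_E)
qed

lemma one_idem: "one \<in> E" by (rule idemI) simp

lemma le_one: "a \<in> E \<Longrightarrow> nleq mult a one"
  using nleq_idem by simp

lemma cover_join:
  assumes fin: "finite C" and cov: "is_cover mult z C (Jset mult s)" and jn: "is_join mult C j"
  shows "j \<in> E \<and> s \<cdot> j = j \<and> (\<forall>e\<in>E. s \<cdot> e = e \<longrightarrow> e = j \<cdot> e)"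
proof -
  have CJ: "C \<subseteq> Jset mult s" using cov unfolding is_cover_def by blast
  have CE: "c \<in> E" if "c \<in> C" for c using CJ that unfolding Jset_def by blast
  have Cs: "s \<cdot> c = c" if "c \<in> C" for c using CJ that unfolding Jset_def by blast
  have comp: "compatible_set mult C"
    unfolding compatible_set_def using CE star_idem idem_mult by simp
  have ub: "nleq mult c j" if "c \<in> C" for c using jn that unfolding is_join_in_def by blast
  have least: "nleq mult j u" if "\<forall>c\<in>C. nleq mult c u" for u
    using jn that unfolding is_join_in_def by blast
  have "nleq mult j one" using least le_one CE by blast
  hence "j = ist j \<cdot> j" unfolding nleq_def by simp
  hence jE: "j \<in> E" using Q_idem[of j] by simp
  have img: "(\<lambda>a. s \<cdot> a) ` C = C" using Cs by force
  have "is_join mult C (s \<cdot> j)" using distr[where s=s, OF fin comp jn] img by simp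
  hence "\<forall>c\<in>C. nleq mult c (s \<cdot> j)" unfolding is_join_in_def by blast
  hence "nleq mult j (s \<cdot> j)" by (rule least)
  hence "j = s \<cdot> (j \<cdot> j)" using nleq_idem[OF jE] by simp
  hence sj: "s \<cdot> j = j" using idemD[OF jE] by simp
  have mx: "e = j \<cdot> e" if eE: "e \<in> E" and se: "s \<cdot> e = e" for e
  proof -
    obtain f where fE: "f \<in> E" and mjf: "mt j f = z" and jjf: "jn j f = one"
      using BA jE by blast
    have jf: "j \<cdot> f = z" using mjf mt_eq[OF jE fE] by simp
    have gz: "e \<cdot> f = z"
    proof (rule ccontr)
      assume nz: "e \<cdot> f \<noteq> z"
      have gE: "e \<cdot> f \<in> E" using idem_mult[OF eE fE] .
      have "s \<cdot> (e \<cdot> f) = e \<cdot> f" using rx[OF se] .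
      hence "e \<cdot> f \<in> Jset mult s" using gE unfolding Jset_def by blast
      then obtain c where cC: "c \<in> C" and cg: "c \<cdot> (e \<cdot> f) \<noteq> z"
        using cov nz unfolding is_cover_def by blast
      have cE: "c \<in> E" using CE cC .
      have cj: "c = j \<cdot> c" using ub[OF cC] nleq_idem[OF cE] by simp
      have "c \<cdot> (e \<cdot> f) = j \<cdot> (c \<cdot> (e \<cdot> f))" using rx[OF cj[symmetric], of "e \<cdot> f"] by simp
      also have "\<dots> = c \<cdot> (j \<cdot> (e \<cdot> f))" using commute_x[OF jE cE] .
      also have "\<dots> = c \<cdot> (e \<cdot> (j \<cdot> f))" using commute_x[OF jE eE] by simp
      also have "\<dots> = z" using jf by simp
      finally show False using cg by simp
    qed
    have "mt e (jn j f) = jn (mt e j) (mt e f)" using BA eE jE fE by blast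
    hence "e = jn (e \<cdot> j) z" using jjf mt_eq[OF eE one_idem] mt_eq[OF eE jE] mt_eq[OF eE fE] gz
      by simp
    also have "jn (e \<cdot> j) z = e \<cdot> j"
    proof (rule jn_eq)
      have ejE: "e \<cdot> j \<in> E" using idem_mult[OF eE jE] .
      show "is_join_in mult E {e \<cdot> j, z} (e \<cdot> j)"
        unfolding is_join_in_def using ejE nleq_idem[OF ejE] nleq_idem[OF z_idem] idemD[OF ejE]
        by simp
    qed
    finally show ?thesis using commute[OF eE jE] by simp
  qed
  show ?thesis using jE sj mx by blast
qed

lemma e_of_prop: "e_of mult z s \<in> E \<and> s \<cdot> e_of mult z s = e_of mult z s \<and>
   (\<forall>e\<in>E. s \<cdot> e = e \<longrightarrow> e = e_of mult z s \<cdot> e)"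
proof -
  obtain C where fin: "finite C" and cov: "is_cover mult z C (Jset mult s)"
    using H unfolding condH_def by blast
  have CE: "c \<in> E" if "c \<in> C" for c using cov that unfolding is_cover_def Jset_def by blast
  have comp: "compatible_set mult C"
    unfolding compatible_set_def using CE star_idem idem_mult by simp
  obtain j where "is_join mult C j" using joins_ex[OF fin comp] by blast
  hence ex: "\<exists>j C. finite C \<and> is_cover mult z C (Jset mult s) \<and> is_join mult C j"
    using fin cov by blast
  have "\<exists>C. finite C \<and> is_cover mult z C (Jset mult s) \<and> is_join mult C (e_of mult z s)"
    unfolding e_of_def using someI_ex[OF ex] .
  then obtain C' where "finite C'" "is_cover mult z C' (Jset mult s)" "is_join mult C' (e_of mult z s)"
    by blast
  thus ?thesis by (rule cover_join)
qed

end

theorem mainTheorem6: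
  fixes mult :: "'a \<Rightarrow> 'a \<Rightarrow> 'a" and z one :: 'a
  assumes "countable (UNIV :: 'a set)"
    and "boolean_inverse_monoid mult z one"
    and "condH mult z"
  shows "\<forall>s t. mult (mult (istar mult s) (e_of mult z (mult s t))) s = e_of mult z (mult t s)"
proof -
  have isg: "inverse_semigroup mult z"
    using assms(2) unfolding boolean_inverse_monoid_def by blast
  interpret BIM mult z one
    by (unfold_locales) (rule isg, rule assms(2), rule assms(3))
  show ?thesis
  proof (intro allI)
    fix s t
    define f where "f = e_of mult z (mult s t)"
    define e where "e = e_of mult z (mult t s)"
    have P: "f \<in> idem mult" "mult (mult s t) f = f" "\<And>g. g \<in> idem mult \<Longrightarrow> mult (mult s t) g = g \<Longrightarrow> g = mult f g"
      using e_of_prop[of "mult s t"] unfolding f_def by blast+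
    have Q: "e \<in> idem mult" "mult (mult t s) e = e" "\<And>g. g \<in> idem mult \<Longrightarrow> mult (mult t s) g = g \<Longrightarrow> g = mult e g"
      using e_of_prop[of "mult t s"] unfolding e_def by blast+
    have F2: "mult s (mult t f) = f" using P(2) by (simp only: assoc)
    have F3: "g = mult f g" if "g \<in> idem mult" "mult s (mult t g) = g" for g
      using P(3)[OF that(1)] that(2) by (simp only: assoc)
    have G2: "mult t (mult s e) = e" using Q(2) by (simp only: assoc)
    have G3: "g = mult e g" if "g \<in> idem mult" "mult t (mult s g) = g" for g
      using Q(3)[OF that(1)] that(2) by (simp only: assoc)
    have "mult (istar mult s) (mult f s) = e" by (rule key[OF P(1) F2 F3 Q(1) G2 G3])
    hence "mult (mult (istar mult s) f) s = e" by (simp only: assoc)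
    thus "mult (mult (istar mult s) (e_of mult z (mult s t))) s = e_of mult z (mult t s)"
      unfolding e_def f_def .
  qed
qed

end
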